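(* Let $j,k\ge 1$ be integers, $\beta,\gamma,\nu>0$, $R_0=\beta/\gamma>1$. For $\boldsymbol{y},\boldsymbol{\theta}\in\mathbb{R}^{j+k}$ define $$H_{j,k}(\boldsymbol{y},\boldsymbol{\theta})=\beta\Big(\sum_{m=j+1}^{j+k}y_m\Big)\Big(1-\sum_{m=1}^{j+k}y_m\Big)\big(e^{\theta_1}-1\big)+j\nu\sum_{m=1}^{j}y_m\big(e^{-\theta_m+\theta_{m+1}}-1\big)+k\gamma\sum_{m=j+1}^{j+k-1}y_m\big(e^{-\theta_m+\theta_{m+1}}-1\big)+k\gamma\,y_{j+k}\big(e^{-\theta_{j+k}}-1\big).$$ Define $\tilde S(\boldsymbol{\theta})=\ln\Big(\frac1k\sum_{m=j+1}^{j+k}e^{\theta_m}\Big)-\frac{\gamma}{\beta}\Big(1-\frac{k}{\sum_{m=j+1}^{j+k}e^{\theta_m}}\Big)$ (a function of $\theta_{j+1},\dots,\theta_{j+k}$ only). Let $\theta_k^*$ be the unique real solution of $\frac{\beta}{k\gamma}\sum_{m=1}^k e^{m\theta}=1$ and let $\boldsymbol{\theta}^*\in\mathbb{R}^{j+k}$ have $\theta^*_1=\dots=\theta^*_{j+1}=k\theta_k^*$ and $\theta^*_{j+i}=(k-i+1)\theta_k^*$ for $i=1,\dots,k$. Then: (i) for every $\boldsymbol{\theta}\in\mathbb{R}^{j+k}$ with $\theta_1=\theta_2=\cdots=\theta_{j+1}$, $H_{j,k}\big(\nabla\tilde S(\boldsymbol{\theta}),\boldsymbol{\theta}\big)=0$;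 (ii) $(\mathbf{0},\boldsymbol{\theta}^* )$ is an equilibrium point of the Hamiltonian system $dy_i/dt=\partial H_{j,k}/\partial\theta_i$, $d\theta_i/dt=-\partial H_{j,k}/\partial y_i$ ($i=1,\dots,j+k$); (iii) $\tilde S(\boldsymbol{\theta}^* )-\tilde S(\mathbf{0})=1-\frac1{R_0}-\ln R_0$.
   Context: $H_{j,k}$ is the Hamiltonian for an SEIS infection model with $j$ latent stages (each of mean duration $1/(j\nu)$) followed by $k$ infectious stages (each of mean duration $1/(k\gamma)$); $y_1,\dots,y_j$ correspond to latent stages and $y_{j+1},\dots,y_{j+k}$ to infectious stages, and $\theta_i$ is the momentum conjugate to $y_i$. $\nabla\tilde S$ denotes the gradient with respect to all $j+k$ components of $\boldsymbol\theta$. *)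

theory Defs
  imports "HOL-Analysis.Analysis"
begin

text \<open>Vectors in R^(j+k) are represented as functions nat => real, using the
components with indices 1..j+k; other components are ignored.\<close>

definition H :: "nat \<Rightarrow> nat \<Rightarrow> real \<Rightarrow> real \<Rightarrow> real \<Rightarrow> (nat \<Rightarrow> real) \<Rightarrow> (nat \<Rightarrow> real) \<Rightarrow> real" where
  "H j k \<beta> \<gamma> \<nu> y \<theta> =
     \<beta> * (\<Sum>m=j+1..j+k. y m) * (1 - (\<Sum>m=1..j+k. y m)) * (exp (\<theta> 1) - 1)
   + real j * \<nu> * (\<Sum>m=1..j. y m * (exp (- \<theta> m + \<theta> (m+1)) - 1))
   + real k * \<gamma> * (\<Sum>m=j+1..j+k-1. y m * (exp (- \<theta> m + \<theta> (m+1)) - 1))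
   + real k * \<gamma> * y (j+k) * (exp (- \<theta> (j+k)) - 1)"

definition S_tilde :: "nat \<Rightarrow> nat \<Rightarrow> real \<Rightarrow> real \<Rightarrow> (nat \<Rightarrow> real) \<Rightarrow> real" where
  "S_tilde j k \<beta> \<gamma> \<theta> =
     ln ((1 / real k) * (\<Sum>m=j+1..j+k. exp (\<theta> m)))
     - (\<gamma> / \<beta>) * (1 - real k / (\<Sum>m=j+1..j+k. exp (\<theta> m)))"

definition partial :: "((nat \<Rightarrow> real) \<Rightarrow> real) \<Rightarrow> nat \<Rightarrow> (nat \<Rightarrow> real) \<Rightarrow> real" where
  "partial f i x = deriv (\<lambda>t. f (x(i := t))) (x i)"

definition grad :: "nat \<Rightarrow> ((nat \<Rightarrow> real) \<Rightarrow> real) \<Rightarrow> (nat \<Rightarrow> real) \<Rightarrow> (nat \<Rightarrow> real)" where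
  "grad n f x = (\<lambda>i. if 1 \<le> i \<and> i \<le> n then partial f i x else 0)"

definition theta_k_star :: "nat \<Rightarrow> real \<Rightarrow> real \<Rightarrow> real" where
  "theta_k_star k \<beta> \<gamma> = (THE \<theta>. \<beta> / (real k * \<gamma>) * (\<Sum>m=1..k. exp (real m * \<theta>)) = 1)"

definition theta_star :: "nat \<Rightarrow> nat \<Rightarrow> real \<Rightarrow> real \<Rightarrow> (nat \<Rightarrow> real)" where
  "theta_star j k \<beta> \<gamma> = (\<lambda>i.
     if 1 \<le> i \<and> i \<le> j + 1 then real k * theta_k_star k \<beta> \<gamma>
     else if j + 1 < i \<and> i \<le> j + k then real (k - (i - j) + 1) * theta_k_star k \<beta> \<gamma>
     else 0)"

end

theory Submission imports Defs begin

lemma geom_id: fixes x :: real shows "(x - 1) * (\<Sum>m=1..k. x ^ m) = x ^ (k+1) - x"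
  by (induction k) (auto simp: algebra_simps)

lemma theta_k_star_prop:
  fixes k :: nat and \<beta> \<gamma> :: real
  assumes "k \<ge> 1" "\<beta> > 0" "\<gamma> > 0" "\<beta> / \<gamma> > 1"
  shows "\<beta> / (real k * \<gamma>) * (\<Sum>m=1..k. exp (real m * theta_k_star k \<beta> \<gamma>)) = 1"
proof -
  define f where "f = (\<lambda>\<theta>::real. \<Sum>m=1..k. exp (real m * \<theta>))"
  have gb: "\<gamma> < \<beta>" using assms by (simp add: field_simps)
  have mono: "f a < f b" if "a < b" for a b
    unfolding f_def
  proof (rule sum_strict_mono)
    show "finite {1..k}" by simp
    show "{1..k} \<noteq> {}" using assms by simp
    fix m assume "m \<in> {1..k}"
    then have "real m > 0" by simp
    then show "exp (real m * a) < exp (real m * b)" using that by simp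
  qed
  have cont: "continuous_on {a..b} f" for a b unfolding f_def by (intro continuous_intros)
  define y where "y = real k * \<gamma> / \<beta>"
  define a where "a = ln (\<gamma> / (2 * \<beta> * real k))"
  have kpos: "real k > 0" using assms by simp
  have k1: "real k \<ge> 1" using assms by simp
  have "\<beta> \<le> \<beta> * (real k * 2)" using k1 assms(2) by (simp add: mult_le_cancel_left1)
  then have "\<gamma> < \<beta> * (real k * 2)" using gb by linarith
  then have a_neg: "a < 0" unfolding a_def using assms gb kpos
    by (subst ln_less_zero_iff) (auto simp: field_simps)
  have "f a \<le> (\<Sum>m=1..k. exp a)" unfolding f_def
  proof (rule sum_mono)
    fix m assume "m \<in> {1..k}"
    then have "real m \<ge> 1" by simp
    then have "real m * a \<le> a" using a_neg by (simp add: mult_le_cancel_right1)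
    then show "exp (real m * a) \<le> exp a" by simp
  qed
  also have "\<dots> = real k * (\<gamma> / (2 * \<beta> * real k))" unfolding a_def using assms kpos by simp
  also have "\<dots> \<le> y" unfolding y_def using assms kpos by (simp add: field_simps)
  finally have fa: "f a \<le> y" .
  have f0: "f 0 = real k" unfolding f_def by simp
  have "y \<le> f 0" unfolding f0 y_def using gb assms kpos by (simp add: field_simps)
  then obtain x where x: "f x = y" using IVT'[of f a y 0] fa a_neg cont by auto
  have eq: "(\<beta> / (real k * \<gamma>) * f t = 1) \<longleftrightarrow> f t = y" for t
    unfolding y_def using assms kpos by (auto simp: field_simps)
  have "\<exists>!t. \<beta> / (real k * \<gamma>) * f t = 1"
  proof (rule ex1I[of _ x])
    show "\<beta> / (real k * \<gamma>) * f x = 1" using eq x by metis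
    fix t assume "\<beta> / (real k * \<gamma>) * f t = 1"
    then have "f t = f x" using eq x by metis
    then show "t = x" using mono by (metis linorder_neqE_linordered_idom less_irrefl)
  qed
  then have "\<beta> / (real k * \<gamma>) * f (THE t. \<beta> / (real k * \<gamma>) * f t = 1) = 1" by (rule theI')
  then show ?thesis unfolding theta_k_star_def f_def .
qed

lemma H_eq:
  fixes y \<theta> :: "nat \<Rightarrow> real" and c :: real
  assumes k1: "k \<ge> 1"
    and y0: "\<And>m. m \<in> {1..j} \<Longrightarrow> y m = 0"
    and yJ: "\<And>m. m \<in> {j+1..j+k} \<Longrightarrow> y m = c * exp (\<theta> m)"
  shows "H j k \<beta> \<gamma> \<nu> y \<theta> =
     \<beta> * (c * (\<Sum>m=j+1..j+k. exp (\<theta> m))) * (1 - c * (\<Sum>m=j+1..j+k. exp (\<theta> m))) * (exp (\<theta> 1) - 1)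
     + real k * \<gamma> * c * (1 - exp (\<theta> (j+1)))"
proof -
  have s1: "(\<Sum>m=j+1..j+k. y m) = c * (\<Sum>m=j+1..j+k. exp (\<theta> m))"
    by (simp add: sum_distrib_left yJ)
  have s0: "(\<Sum>m=1..j. y m) = 0" using y0 by simp
  have s2: "(\<Sum>m=1..j+k. y m) = (\<Sum>m=1..j. y m) + (\<Sum>m=j+1..j+k. y m)"
    by (rule sum.ub_add_nat) simp
  have t2: "(\<Sum>m=1..j. y m * (exp (- \<theta> m + \<theta> (m+1)) - 1)) = 0" using y0 by simp
  have t3: "(\<Sum>m=j+1..j+k-1. y m * (exp (- \<theta> m + \<theta> (m+1)) - 1))
       = (\<Sum>m=j+1..j+k-1. c * exp (\<theta> (Suc m)) - c * exp (\<theta> m))"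
  proof (rule sum.cong)
    fix m assume "m \<in> {j+1..j+k-1}"
    then have "m \<in> {j+1..j+k}" by auto
    then have "y m = c * exp (\<theta> m)" by (rule yJ)
    then show "y m * (exp (- \<theta> m + \<theta> (m+1)) - 1) = c * exp (\<theta> (Suc m)) - c * exp (\<theta> m)"
      by (simp add: algebra_simps exp_add[symmetric])
  qed simp
  also have "\<dots> = c * exp (\<theta> (Suc (j+k-1))) - c * exp (\<theta> (j+1))"
    by (rule sum_Suc_diff) (use k1 in simp)
  also have "\<dots> = c * exp (\<theta> (j+k)) - c * exp (\<theta> (j+1))" using k1 by simp
  finally have t3': "(\<Sum>m=j+1..j+k-1. y m * (exp (- \<theta> m + \<theta> (m+1)) - 1)) = c * exp (\<theta> (j+k)) - c * exp (\<theta> (j+1))" .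
  have yk: "y (j+k) = c * exp (\<theta> (j+k))" using k1 by (intro yJ) simp
  have t4: "y (j+k) * (exp (- \<theta> (j+k)) - 1) = c * (1 - exp (\<theta> (j+k)))"
    by (simp add: yk algebra_simps exp_minus)
  have t4': "real k * \<gamma> * y (j+k) * (exp (- \<theta> (j+k)) - 1) = real k * \<gamma> * (c * (1 - exp (\<theta> (j+k))))"
    using t4 by (simp only: mult.assoc)
  show ?thesis unfolding H_def s2 s0 s1 t2 t3' t4'
    by (simp add: algebra_simps)
qed

lemma sum_upd_in:
  assumes "finite A" "i \<in> A"
  shows "(\<Sum>m\<in>A. g ((\<theta>(i := t)) m)) = g t + (\<Sum>m\<in>A-{i}. g (\<theta> m))"
proof -
  have "(\<Sum>m\<in>A. g ((\<theta>(i := t)) m)) = g t + (\<Sum>m\<in>A-{i}. g ((\<theta>(i := t)) m))"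
    using assms by (simp add: sum.remove)
  also have "(\<Sum>m\<in>A-{i}. g ((\<theta>(i := t)) m)) = (\<Sum>m\<in>A-{i}. g (\<theta> m))"
    by (rule sum.cong) auto
  finally show ?thesis .
qed

lemma sum_upd_notin:
  assumes "i \<notin> A"
  shows "(\<Sum>m\<in>A. g ((\<theta>(i := t)) m)) = (\<Sum>m\<in>A. g (\<theta> m))"
  using assms by (intro sum.cong) auto

lemma grad_S:
  fixes \<theta> :: "nat \<Rightarrow> real"
  assumes k1: "k \<ge> 1" and bp: "\<beta> > 0"
  shows "grad (j+k) (S_tilde j k \<beta> \<gamma>) \<theta> i =
    (if i \<in> {j+1..j+k} then exp (\<theta> i) * (1 / (\<Sum>m=j+1..j+k. exp (\<theta> m))
        - \<gamma> * real k / (\<beta> * (\<Sum>m=j+1..j+k. exp (\<theta> m))^2)) else 0)"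
proof (cases "i \<in> {j+1..j+k}")
  case True
  define R where "R = (\<Sum>m\<in>{j+1..j+k}-{i}. exp (\<theta> m))"
  have R0: "R \<ge> 0" unfolding R_def by (intro sum_nonneg) simp
  have SR: "(\<Sum>m=j+1..j+k. exp (\<theta> m)) = exp (\<theta> i) + R"
    unfolding R_def using True by (simp add: sum.remove)
  have fe: "(\<lambda>t. S_tilde j k \<beta> \<gamma> (\<theta>(i := t))) =
     (\<lambda>t. ln ((1 / real k) * (exp t + R)) - (\<gamma> / \<beta>) * (1 - real k / (exp t + R)))"
  proof -
    have "\<And>t. (\<Sum>m=j+1..j+k. exp ((\<theta>(i:=t)) m)) = exp t + R"
      unfolding R_def using True by (intro sum_upd_in) auto
    then show ?thesis unfolding S_tilde_def by simp
  qed
  have kp: "real k > 0" using k1 by simp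
  have pos: "exp (\<theta> i) + R > 0" using R0 by (simp add: add_pos_nonneg)
  have "((\<lambda>t. ln ((1 / real k) * (exp t + R)) - (\<gamma> / \<beta>) * (1 - real k / (exp t + R)))
      has_real_derivative exp (\<theta> i) * (1 / (exp (\<theta> i) + R) - \<gamma> * real k / (\<beta> * (exp (\<theta> i) + R)^2)))
      (at (\<theta> i))"
    apply (rule derivative_eq_intros refl | (use R0 kp in \<open>simp add: add_pos_nonneg\<close>; fail) | (use pos in simp; fail))+
    apply (use pos kp bp in \<open>simp add: field_simps power2_eq_square\<close>)
    done
  then have "partial (S_tilde j k \<beta> \<gamma>) i \<theta> = exp (\<theta> i) * (1 / (exp (\<theta> i) + R) - \<gamma> * real k / (\<beta> * (exp (\<theta> i) + R)^2))"
    unfolding partial_def fe by (rule DERIV_imp_deriv)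
  then show ?thesis unfolding grad_def SR using True by auto
next
  case False
  have fe: "(\<lambda>t. S_tilde j k \<beta> \<gamma> (\<theta>(i := t))) = (\<lambda>t. S_tilde j k \<beta> \<gamma> \<theta>)"
  proof -
    have "\<And>t. (\<Sum>m=j+1..j+k. exp ((\<theta>(i:=t)) m)) = (\<Sum>m=j+1..j+k. exp (\<theta> m))"
      using False by (intro sum_upd_notin) auto
    then show ?thesis unfolding S_tilde_def by simp
  qed
  have "partial (S_tilde j k \<beta> \<gamma>) i \<theta> = 0"
    unfolding partial_def fe by (rule DERIV_imp_deriv) (rule DERIV_const)
  then show ?thesis unfolding grad_def using False by auto
qed

lemma ts_low:
  assumes "i \<in> {1..j+1}"
  shows "theta_star j k \<beta> \<gamma> i = real k * theta_k_star k \<beta> \<gamma>"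
  using assms unfolding theta_star_def by auto

lemma ts_J:
  assumes "i \<in> {j+1..j+k}"
  shows "theta_star j k \<beta> \<gamma> i = real (j+k+1-i) * theta_k_star k \<beta> \<gamma>"
proof (cases "i = j+1")
  case True
  then show ?thesis unfolding theta_star_def by simp
next
  case False
  then have "k - (i - j) + 1 = j+k+1-i" using assms by auto
  then show ?thesis using assms False unfolding theta_star_def by auto
qed

lemma sum_delta_upd:
  "finite A \<Longrightarrow> (\<Sum>m\<in>A. ((\<lambda>_. 0::real)(i := t)) m * g m) = (if i \<in> A then t * g i else 0)"
  by (simp add: fun_upd_apply if_distrib[of "\<lambda>x. x * _"] sum.delta cong: if_cong)

lemma sum_delta_upd':
  "finite A \<Longrightarrow> (\<Sum>m\<in>A. ((\<lambda>_. 0::real)(i := t)) m) = (if i \<in> A then t else 0)"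
  by (simp add: fun_upd_apply sum.delta)

lemma key_id:
  fixes k :: nat and \<beta> \<gamma> :: real
  assumes "k \<ge> 1" "\<beta> > 0" "\<gamma> > 0" "\<beta> / \<gamma> > 1"
  shows "\<beta> * (exp (real k * theta_k_star k \<beta> \<gamma>) - 1) + real k * \<gamma> * (exp (- theta_k_star k \<beta> \<gamma>) - 1) = 0"
proof -
  define T where "T = theta_k_star k \<beta> \<gamma>"
  define x where "x = exp T"
  define Q where "Q = (\<Sum>m=1..k. x ^ m)"
  have xp: "x > 0" unfolding x_def by simp
  have "\<beta> / (real k * \<gamma>) * (\<Sum>m=1..k. exp (real m * T)) = 1"
    unfolding T_def by (rule theta_k_star_prop[OF assms])
  moreover have "(\<Sum>m=1..k. exp (real m * T)) = Q" unfolding Q_def x_def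
    by (intro sum.cong refl) (simp add: exp_of_nat_mult exp_of_nat2_mult)
  ultimately have "\<beta> / (real k * \<gamma>) * Q = 1" by metis
  then have "\<beta> * Q / (real k * \<gamma>) = 1" by (simp only: times_divide_eq_left)
  moreover have "real k * \<gamma> > 0" using assms by simp
  ultimately have h1: "real k * \<gamma> = \<beta> * Q" by (metis divide_eq_1_iff)
  have h2: "(x - 1) * Q = x ^ (k+1) - x" unfolding Q_def by (rule geom_id)
  have e1: "exp (real k * T) = x ^ k" unfolding x_def by (simp add: exp_of_nat_mult)
  have e2: "exp (- T) = 1 / x" unfolding x_def by (simp add: exp_minus field_simps)
  have "x * (\<beta> * (x ^ k - 1) + \<beta> * Q * (1 / x - 1)) = \<beta> * (x ^ (k+1) - x) - \<beta> * ((x - 1) * Q)"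
    using xp by (simp add: field_simps)
  also have "\<dots> = 0" using h2 by simp
  finally have "\<beta> * (x ^ k - 1) + \<beta> * Q * (1 / x - 1) = 0" using xp by simp
  then show ?thesis unfolding T_def[symmetric] e1 e2 h1 .
qed

lemma H_upd:
  assumes "i \<in> {1..j+k}"
  shows "H j k \<beta> \<gamma> \<nu> ((\<lambda>_. 0)(i := t)) \<theta> =
     \<beta> * (if i \<in> {j+1..j+k} then t else 0) * (1 - t) * (exp (\<theta> 1) - 1)
   + real j * \<nu> * (if i \<in> {1..j} then t * (exp (- \<theta> i + \<theta> (i+1)) - 1) else 0)
   + real k * \<gamma> * (if i \<in> {j+1..j+k-1} then t * (exp (- \<theta> i + \<theta> (i+1)) - 1) else 0)
   + real k * \<gamma> * (if i = j+k then t else 0) * (exp (- \<theta> (j+k)) - 1)"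
  unfolding H_def
  apply (subst sum_delta_upd', simp)+
  apply (subst sum_delta_upd, simp)+
  using assms by simp

lemma S_zero: "k \<ge> 1 \<Longrightarrow> S_tilde j k \<beta> \<gamma> (\<lambda>_. 0) = 0"
  unfolding S_tilde_def by simp

theorem mainTheorem3:
  fixes j k :: nat and \<beta> \<gamma> \<nu> :: real
  assumes "j \<ge> 1" "k \<ge> 1" "\<beta> > 0" "\<gamma> > 0" "\<nu> > 0" "\<beta> / \<gamma> > 1"
  shows "(\<forall>\<theta> :: nat \<Rightarrow> real. (\<forall>i\<in>{1..j+1}. \<theta> i = \<theta> 1) \<longrightarrow>
            H j k \<beta> \<gamma> \<nu> (grad (j+k) (S_tilde j k \<beta> \<gamma>) \<theta>) \<theta> = 0)
       \<and> (\<forall>i\<in>{1..j+k}.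
            ((\<lambda>t. H j k \<beta> \<gamma> \<nu> ((\<lambda>_. 0)(i := t)) (theta_star j k \<beta> \<gamma>)) has_real_derivative 0) (at 0)
          \<and> ((\<lambda>t. H j k \<beta> \<gamma> \<nu> (\<lambda>_. 0) ((theta_star j k \<beta> \<gamma>)(i := t))) has_real_derivative 0)
               (at (theta_star j k \<beta> \<gamma> i)))
       \<and> S_tilde j k \<beta> \<gamma> (theta_star j k \<beta> \<gamma>) - S_tilde j k \<beta> \<gamma> (\<lambda>_. 0)
           = 1 - 1 / (\<beta> / \<gamma>) - ln (\<beta> / \<gamma>)"
proof (intro conjI allI impI ballI)
  fix \<theta> :: "nat \<Rightarrow> real"
  assume th: "\<forall>i\<in>{1..j+1}. \<theta> i = \<theta> 1"
  define Sg where "Sg = (\<Sum>m=j+1..j+k. exp (\<theta> m))"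
  define c where "c = 1 / Sg - \<gamma> * real k / (\<beta> * Sg^2)"
  have Sgp: "Sg > 0" unfolding Sg_def using assms(2) by (intro sum_pos) auto
  have thj: "\<theta> (j+1) = \<theta> 1" using bspec[OF th, of "j+1"] by simp
  have "H j k \<beta> \<gamma> \<nu> (grad (j+k) (S_tilde j k \<beta> \<gamma>) \<theta>) \<theta> =
     \<beta> * (c * Sg) * (1 - c * Sg) * (exp (\<theta> 1) - 1) + real k * \<gamma> * c * (1 - exp (\<theta> (j+1)))"
    unfolding Sg_def
  proof (rule H_eq[OF assms(2)])
    fix m assume m: "m \<in> {1..j}"
    then have "m \<notin> {j+1..j+k}" by auto
    then show "grad (j+k) (S_tilde j k \<beta> \<gamma>) \<theta> m = 0"
      using grad_S[OF assms(2,3), where \<theta>=\<theta> and i=m and j=j and \<gamma>=\<gamma>] by (simp only: if_False)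
  next
    fix m assume m: "m \<in> {j+1..j+k}"
    have "grad (j+k) (S_tilde j k \<beta> \<gamma>) \<theta> m = exp (\<theta> m) * c"
      using grad_S[OF assms(2,3), where \<theta>=\<theta> and i=m and j=j and \<gamma>=\<gamma>] m unfolding c_def Sg_def by (simp only: if_True)
    then show "grad (j+k) (S_tilde j k \<beta> \<gamma>) \<theta> m = c * exp (\<theta> m)" by (simp only: mult.commute)
  qed
  also have "\<beta> * (c * Sg) * (1 - c * Sg) * (exp (\<theta> 1) - 1) + real k * \<gamma> * c * (1 - exp (\<theta> (j+1))) = 0"
  proof -
    have cS: "c * Sg = 1 - \<gamma> * real k / (\<beta> * Sg)" unfolding c_def using Sgp assms(3)
      by (simp add: field_simps power2_eq_square)
    have "\<beta> * (c * Sg) * (1 - c * Sg) = real k * \<gamma> * c"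
      unfolding cS unfolding c_def using Sgp assms(3) by (simp add: field_simps power2_eq_square)
    then have X: "\<beta> * (c * Sg) * (1 - c * Sg) * (exp (\<theta> 1) - 1) = real k * \<gamma> * c * (exp (\<theta> 1) - 1)" by simp
    show ?thesis unfolding thj X by (simp add: algebra_simps)
  qed
  finally show "H j k \<beta> \<gamma> \<nu> (grad (j+k) (S_tilde j k \<beta> \<gamma>) \<theta>) \<theta> = 0" .
next
  fix i assume i: "i \<in> {1..j+k}"
  define T where "T = theta_k_star k \<beta> \<gamma>"
  define ts where "ts = theta_star j k \<beta> \<gamma>"
  have key: "\<beta> * (exp (real k * T) - 1) + real k * \<gamma> * (exp (- T) - 1) = 0"
    unfolding T_def by (rule key_id[OF assms(2,3,4,6)])
  have ts1: "ts 1 = real k * T" unfolding ts_def T_def by (rule ts_low) simp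
  show "((\<lambda>t. H j k \<beta> \<gamma> \<nu> ((\<lambda>_. 0)(i := t)) (theta_star j k \<beta> \<gamma>)) has_real_derivative 0) (at 0)"
  proof (cases "i \<le> j")
    case True
    have "ts (i+1) = ts i" unfolding ts_def using True i by (simp add: ts_low)
    then have "(\<lambda>t. H j k \<beta> \<gamma> \<nu> ((\<lambda>_. 0)(i := t)) ts) = (\<lambda>t. 0)"
      using True i assms(2) by (simp add: H_upd)
    then show ?thesis unfolding ts_def by (simp add: DERIV_const)
  next
    case False
    then have iJ: "i \<in> {j+1..j+k}" using i by auto
    have F: "(if i \<in> {j+1..j+k-1} then t * (exp (- ts i + ts (i+1)) - 1) else 0)
          + (if i = j+k then t else 0) * (exp (- ts (j+k)) - 1) = t * (exp (- T) - 1)" for t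
    proof (cases "i = j+k")
      case True
      have "ts (j+k) = T" unfolding ts_def T_def using assms(2) by (subst ts_J) auto
      moreover have "i \<notin> {j+1..j+k-1}" using True assms(2) by auto
      ultimately show ?thesis using True assms(2) by auto
    next
      case False
      then have iJ': "i \<in> {j+1..j+k-1}" using iJ by auto
      have n: "j+k+1-i = (j+k+1-(i+1)) + 1" using iJ' by auto
      have "ts i = real (j+k+1-i) * T" unfolding ts_def T_def using iJ by (rule ts_J)
      moreover have "ts (i+1) = real (j+k+1-(i+1)) * T" unfolding ts_def T_def using iJ' by (intro ts_J) auto
      ultimately have "- ts i + ts (i+1) = - T" by (subst (asm) n) (simp add: algebra_simps)
      then show ?thesis using False iJ' by simp
    qed
    have "(\<lambda>t. H j k \<beta> \<gamma> \<nu> ((\<lambda>_. 0)(i := t)) ts) =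
        (\<lambda>t. \<beta> * (exp (real k * T) - 1) * (t * (1 - t)) + real k * \<gamma> * (exp (- T) - 1) * t)"
    proof
      fix t
      have "H j k \<beta> \<gamma> \<nu> ((\<lambda>_. 0)(i := t)) ts =
        \<beta> * t * (1 - t) * (exp (ts 1) - 1) + real k * \<gamma> *
          ((if i \<in> {j+1..j+k-1} then t * (exp (- ts i + ts (i+1)) - 1) else 0)
          + (if i = j+k then t else 0) * (exp (- ts (j+k)) - 1))"
        using iJ i False by (simp add: H_upd algebra_simps)
      also have "\<dots> = \<beta> * (exp (real k * T) - 1) * (t * (1 - t)) + real k * \<gamma> * (exp (- T) - 1) * t"
        unfolding F ts1 by (simp add: algebra_simps)
      finally show "H j k \<beta> \<gamma> \<nu> ((\<lambda>_. 0)(i := t)) ts = \<beta> * (exp (real k * T) - 1) * (t * (1 - t)) + real k * \<gamma> * (exp (- T) - 1) * t" .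
    qed
    moreover have "((\<lambda>t. \<beta> * (exp (real k * T) - 1) * (t * (1 - t)) + real k * \<gamma> * (exp (- T) - 1) * t)
       has_real_derivative (\<beta> * (exp (real k * T) - 1) + real k * \<gamma> * (exp (- T) - 1))) (at 0)"
      by (rule derivative_eq_intros refl | simp)+
    ultimately show ?thesis unfolding ts_def key by simp
  qed
next
  fix i assume i: "i \<in> {1..j+k}"
  have "(\<lambda>t. H j k \<beta> \<gamma> \<nu> (\<lambda>_. 0) ((theta_star j k \<beta> \<gamma>)(i := t))) = (\<lambda>t. 0)"
    unfolding H_def by simp
  then show "((\<lambda>t. H j k \<beta> \<gamma> \<nu> (\<lambda>_. 0) ((theta_star j k \<beta> \<gamma>)(i := t))) has_real_derivative 0)
               (at (theta_star j k \<beta> \<gamma> i))" by (simp add: DERIV_const)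
next
  define T where "T = theta_k_star k \<beta> \<gamma>"
  have kp: "real k > 0" using assms(2) by simp
  have P: "\<beta> / (real k * \<gamma>) * (\<Sum>m=1..k. exp (real m * T)) = 1"
    unfolding T_def by (rule theta_k_star_prop[OF assms(2,3,4,6)])
  have "(\<Sum>m=j+1..j+k. exp (theta_star j k \<beta> \<gamma> m)) = (\<Sum>m=j+1..j+k. exp (real (j+k+1-m) * T))"
    unfolding T_def by (intro sum.cong refl) (simp add: ts_J)
  also have "\<dots> = (\<Sum>m=1..k. exp (real m * T))"
    by (rule sum.reindex_bij_witness[of _ "\<lambda>m. j+k+1-m" "\<lambda>m. j+k+1-m"]) auto
  also have "\<dots> = real k * \<gamma> / \<beta>" using P assms kp by (simp add: field_simps)
  finally have Q: "(\<Sum>m=j+1..j+k. exp (theta_star j k \<beta> \<gamma> m)) = real k * \<gamma> / \<beta>" .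
  have "S_tilde j k \<beta> \<gamma> (theta_star j k \<beta> \<gamma>) = ln (\<gamma> / \<beta>) - \<gamma> / \<beta> * (1 - \<beta> / \<gamma>)"
    unfolding S_tilde_def Q using kp assms by (simp add: field_simps)
  also have "ln (\<gamma> / \<beta>) = - ln (\<beta> / \<gamma>)" using assms by (simp add: ln_div)
  also have "\<gamma> / \<beta> * (1 - \<beta> / \<gamma>) = \<gamma> / \<beta> - 1" using assms(3,4) by (simp add: field_simps)
  finally have St: "S_tilde j k \<beta> \<gamma> (theta_star j k \<beta> \<gamma>) = 1 - \<gamma> / \<beta> - ln (\<beta> / \<gamma>)" by simp
  show "S_tilde j k \<beta> \<gamma> (theta_star j k \<beta> \<gamma>) - S_tilde j k \<beta> \<gamma> (\<lambda>_. 0)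
           = 1 - 1 / (\<beta> / \<gamma>) - ln (\<beta> / \<gamma>)"
    unfolding St S_zero[OF assms(2)] by simp
qed

end
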